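(* Let $P_n$ be the path with vertex set $\{1,\dots,n\}$ and edges $\{j,j+1\}$, and let $A$ be a set of $m$ vertices with $2\le m\le n$. The following are equivalent: (1) $A$ is a maximizer of $W$ on $P_n$; (2) $A$ is a local maximizer of $W$ on $P_n$; (3) if $m$ is even, $A=\{1,\dots,\frac m2\}\cup\{n-\frac m2+1,\dots,n\}$; and if $m$ is odd, $A=\{1,\dots,\frac{m-1}{2}\}\cup\{j\}\cup\{n-\frac{m-1}{2}+1,\dots,n\}$ for some integer $j$ with $\frac{m-1}{2}<j<n-\frac{m-1}{2}+1$.
   Context: $W(A)=\sum_{\{u,v\}\subseteq A,u\ne v}d(u,v)$ over unordered pairs, $d$ the shortest-path distance. $A$ is a maximizer of $W$ if $W(A)=\max\{W(B): B\subseteq V(P_n), |B|=|A|\}$. A perturbation of $A$ is a set $(A\setminus\{u\})\cup\{v\}$ with $u\in A$, $v\notin A$, $uv$ an edge; $A$ is a local maximizer of $W$ if $W(A)\ge W(B)$ for every perturbation $B$ of $A$ (i.e. $W(A)$ equals the maximum of $W$ over perturbations of $A$). *)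

theory Defs
  imports Main
begin

text \<open>The path P_n: vertex set {1..n}, edges {j, j+1}. Shortest-path distance is |u - v|.\<close>

definition path_vertices :: "nat \<Rightarrow> nat set" where
  "path_vertices n = {1..n}"

definition path_edge :: "nat \<Rightarrow> nat \<Rightarrow> nat \<Rightarrow> bool" where
  "path_edge n u v \<longleftrightarrow> u \<in> path_vertices n \<and> v \<in> path_vertices n \<and> (v = u + 1 \<or> u = v + 1)"

definition path_dist :: "nat \<Rightarrow> nat \<Rightarrow> nat" where
  "path_dist u v = (if u \<le> v then v - u else u - v)"

definition W :: "nat set \<Rightarrow> nat" where
  "W A = (\<Sum>p\<in>{(u, v). u \<in> A \<and> v \<in> A \<and> u < v}. path_dist (fst p) (snd p))"

definition is_maximizer :: "nat \<Rightarrow> nat set \<Rightarrow> bool" where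
  "is_maximizer n A \<longleftrightarrow> A \<subseteq> path_vertices n \<and>
     (\<forall>B. B \<subseteq> path_vertices n \<and> card B = card A \<longrightarrow> W B \<le> W A)"

definition perturbations :: "nat \<Rightarrow> nat set \<Rightarrow> nat set set" where
  "perturbations n A = {(A - {u}) \<union> {v} | u v. u \<in> A \<and> v \<notin> A \<and> path_edge n u v}"

definition is_local_maximizer :: "nat \<Rightarrow> nat set \<Rightarrow> bool" where
  "is_local_maximizer n A \<longleftrightarrow> A \<subseteq> path_vertices n \<and>
     (\<forall>B \<in> perturbations n A. W B \<le> W A)"

end

theory Submission imports Defs begin

lemma dist_sym: "path_dist u v = path_dist v u" by (simp add: path_dist_def)

lemma W_insert:
  assumes "finite B" "x \<notin> B"
  shows "W (insert x B) = W B + (\<Sum>b\<in>B. path_dist b x)"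
proof -
  have pe: "{(u,v). u \<in> insert x B \<and> v \<in> insert x B \<and> u < v} =
     {(u,v). u\<in>B \<and> v\<in>B \<and> u<v} \<union> ((\<lambda>b. (x,b)) ` {b\<in>B. x<b} \<union> (\<lambda>b. (b,x)) ` {b\<in>B. b<x})"
    using assms(2) by auto
  have fin: "finite {(u,v). u\<in>B \<and> v\<in>B \<and> u<v}"
    by (rule finite_subset[of _ "B \<times> B"]) (auto simp: assms)
  have "W (insert x B) = W B + ((\<Sum>b\<in>{b\<in>B. x<b}. path_dist x b) + (\<Sum>b\<in>{b\<in>B. b<x}. path_dist b x))"
    unfolding W_def pe
    apply (subst sum.union_disjoint)
    using fin assms apply auto[4]
    apply (subst sum.union_disjoint)
    using assms apply auto[4]
    apply (subst sum.reindex, simp add: inj_on_def)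
    apply (subst sum.reindex, simp add: inj_on_def)
    apply simp
    done
  also have "(\<Sum>b\<in>{b\<in>B. x<b}. path_dist x b) = (\<Sum>b\<in>{b\<in>B. x<b}. path_dist b x)"
    by (simp add: dist_sym)
  also have "\<dots> + (\<Sum>b\<in>{b\<in>B. b<x}. path_dist b x) = (\<Sum>b\<in>B. path_dist b x)"
  proof -
    have "B = {b\<in>B. x<b} \<union> {b\<in>B. b<x}" using assms(2) by (auto simp: not_less order_le_less)
    then show ?thesis using assms(1)
      by (metis (no_types, lifting) sum.union_disjoint disjoint_iff finite_Un mem_Collect_eq not_less_iff_gr_or_eq)
  qed
  finally show ?thesis .
qed

lemma W_move:
  assumes "finite A" "u \<in> A" "v \<notin> A"
  shows "int (W ((A - {u}) \<union> {v})) - int (W A) =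
     (\<Sum>c\<in>A-{u}. int (path_dist c v)) - (\<Sum>c\<in>A-{u}. int (path_dist c u))"
proof -
  have e1: "(A - {u}) \<union> {v} = insert v (A - {u})" by auto
  have e2: "A = insert u (A - {u})" using assms by auto
  have "W ((A - {u}) \<union> {v}) = W (A - {u}) + (\<Sum>c\<in>A-{u}. path_dist c v)"
    unfolding e1 by (rule W_insert) (use assms in auto)
  moreover have "W A = W (A - {u}) + (\<Sum>c\<in>A-{u}. path_dist c u)"
    by (subst e2, rule W_insert) (use assms in auto)
  ultimately show ?thesis by (simp add: of_nat_sum)
qed

lemma shift_right:
  assumes "finite C" "u \<notin> C" "Suc u \<notin> C"
  shows "(\<Sum>c\<in>C. int (path_dist c (Suc u))) - (\<Sum>c\<in>C. int (path_dist c u))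
       = int (card {c\<in>C. c<u}) - int (card {c\<in>C. u<c})"
proof -
  have "(\<Sum>c\<in>C. int (path_dist c (Suc u))) - (\<Sum>c\<in>C. int (path_dist c u))
      = (\<Sum>c\<in>C. int (path_dist c (Suc u)) - int (path_dist c u))"
    by (simp add: sum_subtractf)
  also have "\<dots> = (\<Sum>c\<in>C. if c < u then 1 else -1)"
    apply (rule sum.cong, simp)
    using assms by (auto simp: path_dist_def)
  also have "\<dots> = int (card {c\<in>C. c<u}) - int (card {c\<in>C. u<c})"
  proof -
    have "{c\<in>C. \<not> c<u} = {c\<in>C. u<c}" using assms(2) by (auto simp: not_less order_le_less)
    then show ?thesis using assms(1)
      by (simp add: sum.If_cases Int_def Compl_eq)
  qed
  finally show ?thesis .
qed

lemma shift_left: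
  assumes "finite C" "w \<notin> C" "Suc w \<notin> C"
  shows "(\<Sum>c\<in>C. int (path_dist c w)) - (\<Sum>c\<in>C. int (path_dist c (Suc w)))
       = int (card {c\<in>C. Suc w<c}) - int (card {c\<in>C. c<Suc w})"
proof -
  have a: "{c\<in>C. c<Suc w} = {c\<in>C. c<w}" using assms by (auto simp: less_Suc_eq)
  have b: "{c\<in>C. Suc w<c} = {c\<in>C. w<c}" using assms by (auto intro: Suc_lessI)
  show ?thesis using shift_right[OF assms] a b by simp
qed


lemma card_split_in:
  fixes A :: "nat set"
  assumes "finite A" "u \<in> A"
  shows "card {a\<in>A. a<u} + card {a\<in>A. u<a} = card A - 1"
proof -
  have "A - {u} = {a\<in>A. a<u} \<union> {a\<in>A. u<a}" by (auto simp: nat_neq_iff)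
  moreover have "card ({a\<in>A. a<u} \<union> {a\<in>A. u<a}) = card {a\<in>A. a<u} + card {a\<in>A. u<a}"
    by (rule card_Un_disjoint) (use assms in auto)
  ultimately show ?thesis using assms card_Diff_singleton[OF assms(2)] by metis
qed

lemma local_right:
  assumes "is_local_maximizer n A" "finite A" "u \<in> A" "Suc u \<le> n" "Suc u \<notin> A" "1 \<le> u"
  shows "card {a\<in>A. a<u} \<le> card {a\<in>A. u<a}"
proof -
  have "(A - {u}) \<union> {Suc u} \<in> perturbations n A"
    unfolding perturbations_def path_edge_def path_vertices_def
    apply (simp only: mem_Collect_eq)
    apply (rule exI[of _ u], rule exI[of _ "Suc u"]) using assms by auto
  then have "W ((A - {u}) \<union> {Suc u}) \<le> W A" using assms(1) unfolding is_local_maximizer_def by blast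
  then have "int (W ((A - {u}) \<union> {Suc u})) - int (W A) \<le> 0" by simp
  then have "int (card {c\<in>A-{u}. c<u}) - int (card {c\<in>A-{u}. u<c}) \<le> 0"
    using W_move[OF assms(2,3,5)] shift_right[of "A-{u}" u] assms by simp
  moreover have "{c\<in>A-{u}. c<u} = {a\<in>A. a<u}" "{c\<in>A-{u}. u<c} = {a\<in>A. u<a}" by auto
  ultimately show ?thesis by simp
qed

lemma local_left:
  assumes "is_local_maximizer n A" "finite A" "Suc w \<in> A" "w \<notin> A" "1 \<le> w" "A \<subseteq> {1..n}"
  shows "card {a\<in>A. Suc w<a} \<le> card {a\<in>A. a<Suc w}"
proof -
  have "(A - {Suc w}) \<union> {w} \<in> perturbations n A"
    unfolding perturbations_def path_edge_def path_vertices_def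
    apply (simp only: mem_Collect_eq)
    apply (rule exI[of _ "Suc w"], rule exI[of _ w]) using assms by auto
  then have "W ((A - {Suc w}) \<union> {w}) \<le> W A" using assms(1) unfolding is_local_maximizer_def by blast
  then have "int (W ((A - {Suc w}) \<union> {w})) - int (W A) \<le> 0" by simp
  then have "int (card {c\<in>A-{Suc w}. Suc w<c}) - int (card {c\<in>A-{Suc w}. c<Suc w}) \<le> 0"
    using W_move[OF assms(2,3,4)] shift_left[of "A-{Suc w}" w] assms by simp
  moreover have "{c\<in>A-{Suc w}. c<Suc w} = {a\<in>A. a<Suc w}" "{c\<in>A-{Suc w}. Suc w<c} = {a\<in>A. Suc w<a}" by auto
  ultimately show ?thesis by simp
qed

lemma low_in:
  assumes loc: "is_local_maximizer n A" and sub: "A \<subseteq> {1..n}" and cA: "card A = m"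
    and m2: "2 \<le> m" and t1: "1 \<le> t" and tk: "t \<le> m div 2"
  shows "t \<in> A"
proof (rule ccontr)
  assume tA: "t \<notin> A"
  have finA: "finite A" using sub finite_subset by blast
  have lt: "card {a\<in>A. a<t} \<le> t - 1"
  proof -
    have "{a\<in>A. a<t} \<subseteq> {1..<t}" using sub by auto
    then show ?thesis using card_mono[of "{1..<t}"] by fastforce
  qed
  define X where "X = {a\<in>A. t<a}"
  have "A = {a\<in>A. a<t} \<union> X" using tA unfolding X_def by (auto simp: not_less order_le_less)
  then have "card A \<le> card {a\<in>A. a<t} + card X" by (metis card_Un_le)
  then have "X \<noteq> {}" using lt cA tk m2 by auto
  have finX: "finite X" using finA X_def by simp
  define u where "u = Min X"
  have uX: "u \<in> X" using Min_in[OF finX \<open>X \<noteq> {}\<close>] u_def by simp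
  then have uA: "u \<in> A" and tu: "t < u" unfolding X_def by auto
  obtain w where uw: "u = Suc w" using tu by (cases u) auto
  have wA: "w \<notin> A"
  proof
    assume "w \<in> A"
    moreover have "w \<noteq> t" using tA \<open>w \<in> A\<close> by auto
    ultimately have "w \<in> X" using tu uw unfolding X_def by auto
    then have "u \<le> w" using Min_le[OF finX] u_def by simp
    then show False using uw by simp
  qed
  have "card {a\<in>A. Suc w<a} \<le> card {a\<in>A. a<Suc w}"
    by (rule local_left[OF loc finA _ wA _ sub]) (use uA uw tu t1 in auto)
  moreover have "{a\<in>A. a<u} = {a\<in>A. a<t}"
  proof -
    have "a < t" if "a \<in> A" "a < u" for a
    proof (rule ccontr)
      assume "\<not> a < t"
      then have "a \<in> X" using that tA unfolding X_def by (auto simp: not_less order_le_less)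
      then show False using Min_le[OF finX] u_def that by fastforce
    qed
    then show ?thesis using tu by auto
  qed
  moreover have "card {a\<in>A. a<u} + card {a\<in>A. u<a} = m - 1" using card_split_in[OF finA uA] cA by simp
  ultimately show False using lt uw tk t1 m2 by simp
qed

lemma high_in:
  assumes loc: "is_local_maximizer n A" and sub: "A \<subseteq> {1..n}" and cA: "card A = m"
    and m2: "2 \<le> m" and t1: "n - m div 2 + 1 \<le> t" and tn: "t \<le> n" and mn: "m \<le> n"
  shows "t \<in> A"
proof (rule ccontr)
  assume tA: "t \<notin> A"
  have finA: "finite A" using sub finite_subset by blast
  have lt: "card {a\<in>A. t<a} \<le> n - t"
  proof -
    have "{a\<in>A. t<a} \<subseteq> {t<..n}" using sub by auto
    then show ?thesis using card_mono[of "{t<..n}"] by fastforce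
  qed
  define X where "X = {a\<in>A. a<t}"
  have "A = {a\<in>A. t<a} \<union> X" using tA unfolding X_def by (auto simp: not_less order_le_less)
  then have "card A \<le> card {a\<in>A. t<a} + card X" by (metis card_Un_le)
  then have "X \<noteq> {}" using lt cA t1 m2 mn by auto
  have finX: "finite X" using finA X_def by simp
  define u where "u = Max X"
  have uX: "u \<in> X" using Max_in[OF finX \<open>X \<noteq> {}\<close>] u_def by simp
  then have uA: "u \<in> A" and tu: "u < t" unfolding X_def by auto
  have wA: "Suc u \<notin> A"
  proof
    assume "Suc u \<in> A"
    moreover have "Suc u \<noteq> t" using tA \<open>Suc u \<in> A\<close> by auto
    ultimately have "Suc u \<in> X" using tu unfolding X_def by auto
    then have "Suc u \<le> u" using Max_ge[OF finX] u_def by simp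
    then show False by simp
  qed
  have "card {a\<in>A. a<u} \<le> card {a\<in>A. u<a}"
    by (rule local_right[OF loc finA uA _ wA]) (use uA tu tn sub in auto)
  moreover have "{a\<in>A. u<a} = {a\<in>A. t<a}"
  proof -
    have "t < a" if "a \<in> A" "u < a" for a
    proof (rule ccontr)
      assume "\<not> t < a"
      then have "a \<in> X" using that tA unfolding X_def by (auto simp: not_less order_le_less)
      then show False using Max_ge[OF finX] u_def that by fastforce
    qed
    then show ?thesis using tu by auto
  qed
  moreover have "card {a\<in>A. a<u} + card {a\<in>A. u<a} = m - 1" using card_split_in[OF finA uA] cA by simp
  ultimately show False using lt tn t1 m2 mn by simp
qed


definition form :: "nat \<Rightarrow> nat \<Rightarrow> nat set \<Rightarrow> bool" where
  "form n m A \<longleftrightarrow> (if even m then A = {1..m div 2} \<union> {n - m div 2 + 1..n}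
             else (\<exists>j::nat. (m - 1) div 2 < j \<and> j < n - (m - 1) div 2 + 1 \<and>
                     A = {1..(m - 1) div 2} \<union> {j} \<union> {n - (m - 1) div 2 + 1..n}))"

lemma local_form:
  assumes loc: "is_local_maximizer n A" and sub: "A \<subseteq> {1..n}" and cA: "card A = m"
    and m2: "2 \<le> m" and mn: "m \<le> n"
  shows "form n m A"
proof -
  define k where "k = m div 2"
  have finA: "finite A" using sub finite_subset by blast
  have LU: "{1..k} \<union> {n-k+1..n} \<subseteq> A"
  proof
    fix t assume "t \<in> {1..k} \<union> {n-k+1..n}"
    then show "t \<in> A"
    proof
      assume "t \<in> {1..k}" then show ?thesis using low_in[OF loc sub cA m2, of t] k_def by simp
    next
      assume "t \<in> {n-k+1..n}" then show ?thesis using high_in[OF loc sub cA m2 _ _ mn, of t] k_def by simp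
    qed
  qed
  have cU: "card ({1..k} \<union> {n-k+1..n}) = 2*k"
    by (subst card_Un_disjoint) (use mn k_def in auto)
  show ?thesis
  proof (cases "even m")
    case True
    then have "m = 2*k" using k_def by simp
    then have "{1..k} \<union> {n-k+1..n} = A" using card_subset_eq[OF finA LU] cU cA by simp
    then show ?thesis using True unfolding form_def k_def by simp
  next
    case False
    then have mk: "m = 2*k+1" "(m-1) div 2 = k" using k_def by presburger+
    have "card (A - ({1..k} \<union> {n-k+1..n})) = 1"
      using card_Diff_subset[OF _ LU] cU cA mk by simp
    then obtain j where j: "A - ({1..k} \<union> {n-k+1..n}) = {j}" by (meson card_1_singletonE)
    then have jA: "j \<in> A" and jn: "j \<notin> {1..k} \<union> {n-k+1..n}" by auto
    then have "k < j" "j < n - k + 1" using sub by auto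
    moreover have "A = {1..k} \<union> {j} \<union> {n-k+1..n}" using j LU by blast
    ultimately show ?thesis using False mk unfolding form_def by auto
  qed
qed

lemma sum_low:
  assumes "k < j"
  shows "(\<Sum>b\<in>{1..k}. int (path_dist b j)) = int k * int j - (\<Sum>b\<in>{1..k}. int b)"
proof -
  have "(\<Sum>b\<in>{1..k}. int (path_dist b j)) = (\<Sum>b\<in>{1..k}. int j - int b)"
    by (rule sum.cong) (use assms in \<open>auto simp: path_dist_def\<close>)
  also have "\<dots> = (\<Sum>b\<in>{1..k}. int j) - (\<Sum>b\<in>{1..k}. int b)" by (rule sum_subtractf)
  also have "(\<Sum>b\<in>{1..k}. int j) = int k * int j" by simp
  finally show ?thesis .
qed

lemma sum_high:
  assumes "j < n - k + 1" "k \<le> n"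
  shows "(\<Sum>b\<in>{n-k+1..n}. int (path_dist b j)) = (\<Sum>b\<in>{n-k+1..n}. int b) - int k * int j"
proof -
  have "(\<Sum>b\<in>{n-k+1..n}. int (path_dist b j)) = (\<Sum>b\<in>{n-k+1..n}. int b - int j)"
    by (rule sum.cong) (use assms in \<open>auto simp: path_dist_def\<close>)
  also have "\<dots> = (\<Sum>b\<in>{n-k+1..n}. int b) - (\<Sum>b\<in>{n-k+1..n}. int j)" by (rule sum_subtractf)
  also have "(\<Sum>b\<in>{n-k+1..n}. int j) = int k * int j" using assms by simp
  finally show ?thesis .
qed

lemma W_odd:
  assumes "k < j" "j < n - k + 1" "2*k \<le> n"
  shows "int (W ({1..k} \<union> {j} \<union> {n-k+1..n})) = int (W ({1..k} \<union> {n-k+1..n}))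
          + (\<Sum>b\<in>{n-k+1..n}. int b) - (\<Sum>b\<in>{1..k}. int b)"
proof -
  have e: "{1..k} \<union> {j} \<union> {n-k+1..n} = insert j ({1..k} \<union> {n-k+1..n})" by auto
  have "W ({1..k} \<union> {j} \<union> {n-k+1..n}) = W ({1..k} \<union> {n-k+1..n}) + (\<Sum>b\<in>{1..k} \<union> {n-k+1..n}. path_dist b j)"
    unfolding e by (rule W_insert) (use assms in auto)
  moreover have "(\<Sum>b\<in>{1..k} \<union> {n-k+1..n}. int (path_dist b j)) =
      (\<Sum>b\<in>{1..k}. int (path_dist b j)) + (\<Sum>b\<in>{n-k+1..n}. int (path_dist b j))"
    by (rule sum.union_disjoint) (use assms in auto)
  moreover have "int (\<Sum>b\<in>{1..k} \<union> {n-k+1..n}. path_dist b j) = (\<Sum>b\<in>{1..k} \<union> {n-k+1..n}. int (path_dist b j))"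
    by (rule of_nat_sum)
  ultimately show ?thesis using sum_low[OF assms(1)] sum_high[OF assms(2)] assms
    by linarith
qed

lemma form_W_eq:
  assumes "form n m A" "form n m B" "m \<le> n"
  shows "W A = W B"
proof (cases "even m")
  case True then show ?thesis using assms unfolding form_def by simp
next
  case False
  define k where "k = (m-1) div 2"
  have "2*k \<le> n" using assms k_def by simp
  obtain j where j: "k < j" "j < n - k + 1" "A = {1..k} \<union> {j} \<union> {n-k+1..n}"
    using assms(1) False unfolding form_def k_def by meson
  obtain j' where j': "k < j'" "j' < n - k + 1" "B = {1..k} \<union> {j'} \<union> {n-k+1..n}"
    using assms(2) False unfolding form_def k_def by meson
  have "int (W A) = int (W B)" using W_odd[OF j(1,2) \<open>2*k \<le> n\<close>] W_odd[OF j'(1,2) \<open>2*k \<le> n\<close>] j(3) j'(3) by simp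
  then show ?thesis by simp
qed

lemma max_local:
  assumes "is_maximizer n A" shows "is_local_maximizer n A"
proof -
  have sub: "A \<subseteq> {1..n}" using assms unfolding is_maximizer_def path_vertices_def by simp
  then have finA: "finite A" using finite_subset by blast
  show ?thesis unfolding is_local_maximizer_def
  proof (intro conjI ballI)
    show "A \<subseteq> path_vertices n" using sub path_vertices_def by simp
    fix B assume "B \<in> perturbations n A"
    then obtain u v where B: "B = (A - {u}) \<union> {v}" "u \<in> A" "v \<notin> A" "path_edge n u v"
      unfolding perturbations_def by auto
    have "B \<subseteq> path_vertices n" using B sub unfolding path_edge_def path_vertices_def by auto
    moreover have "card A > 0" using B(2) finA card_gt_0_iff by blast
    moreover have "card B = card A" using B finA \<open>card A > 0\<close> by (simp add: card_Diff_singleton)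
    ultimately show "W B \<le> W A" using assms unfolding is_maximizer_def by blast
  qed
qed

lemma form_max:
  assumes sub: "A \<subseteq> {1..n}" and cA: "card A = m" and m2: "2 \<le> m" and mn: "m \<le> n"
    and f: "form n m A"
  shows "is_maximizer n A"
proof -
  define S where "S = {B. B \<subseteq> {1..n} \<and> card B = m}"
  have finS: "finite S" unfolding S_def by (rule finite_subset[of _ "Pow {1..n}"]) auto
  have "A \<in> S" using sub cA S_def by simp
  then have ne: "W ` S \<noteq> {}" by auto
  obtain B0 where B0: "B0 \<in> S" "W B0 = Max (W ` S)"
    using Max_in[OF finite_imageI[OF finS] ne] by auto
  have ge: "W B \<le> W B0" if "B \<in> S" for B
    by (metis B0(2) Max_ge finS finite_imageI imageI that)
  have "is_maximizer n B0" unfolding is_maximizer_def path_vertices_def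
    using B0(1) ge unfolding S_def by auto
  then have "is_local_maximizer n B0" by (rule max_local)
  then have "form n m B0" using local_form B0(1) m2 mn unfolding S_def by blast
  then have "W A = W B0" using form_W_eq f mn by blast
  then show ?thesis unfolding is_maximizer_def path_vertices_def using sub ge cA S_def by auto
qed

theorem mainTheorem11:
  fixes n m :: nat and A :: "nat set"
  assumes "A \<subseteq> {1..n}" and "card A = m" and "2 \<le> m" and "m \<le> n"
  shows "(is_maximizer n A \<longleftrightarrow> is_local_maximizer n A) \<and>
         (is_local_maximizer n A \<longleftrightarrow>
            (if even m then A = {1..m div 2} \<union> {n - m div 2 + 1..n}
             else (\<exists>j::nat. (m - 1) div 2 < j \<and> j < n - (m - 1) div 2 + 1 \<and>
                     A = {1..(m - 1) div 2} \<union> {j} \<union> {n - (m - 1) div 2 + 1..n})))"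
proof -
  have a: "is_local_maximizer n A \<Longrightarrow> form n m A" by (rule local_form[OF _ assms])
  have b: "form n m A \<Longrightarrow> is_maximizer n A" by (rule form_max[OF assms])
  have c: "is_maximizer n A \<Longrightarrow> is_local_maximizer n A" by (rule max_local)
  have "is_local_maximizer n A \<longleftrightarrow> form n m A" using a b c by blast
  moreover have "is_maximizer n A \<longleftrightarrow> is_local_maximizer n A" using a b c by blast
  ultimately show ?thesis unfolding form_def by simp
qed

end
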